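(* Let $(J,S)$ be a homogeneous $d$-dimensional multi-time Markov renewal chain with semi-Markov kernel $q$, $u=\sum_{n\ge0}q^{(n)}$, Markov renewal function $U$, and first-hitting-time distribution functions $G=(G_{ij})_{i,j\in E}$. Then $$G=(U-\mathrm{dg}(\mathbbm{1}_s))*\mathrm{dg}(u)^{(-1)}.$$
   Context: $E=\{1,\dots,s\}$; $\mathcal{M}_s(\mathbb{N}^d)$ is the set of functions $\mathbb{N}^d\to\mathbb{R}^{s\times s}$ with convolution $[A*B](k)=\sum_{l+l'=k}A(l)B(l')$, identity $\mathbbm{I}_s$, powers $A^{(n)}$, convolutional inverse $A^{(-1)}$. $\mathrm{dg}(\mathbbm{1}_s)$ is the matrix sequence equal to $I_s$ at every point. $\mathbb{N}^d$ has the componentwise partial order, $k<l$ meaning $k\le l$, $k\ne l$. A homogeneous $d$-dimensional multi-time Markov renewal chain is a process $(J_n,S_n)_{n\in\mathbb{N}}$, $J_n\in E$, $S_n\in\mathbb{N}^d$, $S_0=0_d$, $S_n<S_{n+1}$, with a.s. $\mathbb{P}(J_{n+1}=j,S_{n+1}-S_n=k\mid J_{0:n},S_{0:n})=q_{J_nj}(k)$, $q_{ij}(k)=\mathbb{P}(J_{n+1}=j,S_{n+1}-S_n=k\mid J_n=i)$ independent of $n$. $\mathbb{P}_i,\mathbb{E}_i$: conditional on $J_0=i$. $\mathrm{dg}(u)$: diagonal matrix sequence with entries $u_{jj}$. $N(k)=\sup\{n:S_n\le k\}$, $\widetilde{N}_j(k)=\sum_{n=0}^{N(k)}\mathbf{1}\{J_n=j\}$,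 $U_{ij}(k)=\mathbb{E}_i[\widetilde{N}_j(k)]$. With $m_j=\min\{l\ge1:J_l=j\}$, $g_{ij}(k)=\mathbb{P}_i(S_{m_j}=k)$ and $G_{ij}(k)=\sum_{l\le k}g_{ij}(l)=\mathbb{P}_i(S_{m_j}\le k)$. *)

theory Defs
  imports "HOL-Probability.Probability" "HOL-Library.Function_Algebras"
begin

text \<open>Time points live in N^d, rendered as functions 'd => nat for a finite index type 'd
  (componentwise order le_fun, pointwise addition/subtraction).  The state space E is a
  finite type 'e (s = CARD('e)); s x s matrices are real^'e^'e.\<close>

type_synonym ('d, 'e) mseq = "('d \<Rightarrow> nat) \<Rightarrow> real^'e^'e"

definition conv :: "('d::finite, 'e::finite) mseq \<Rightarrow> ('d, 'e) mseq \<Rightarrow> ('d, 'e) mseq" where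
  "conv A B = (\<lambda>k. \<Sum>l\<in>{l. l \<le> k}. A l ** B (k - l))"

definition conv_id :: "('d::finite, 'e::finite) mseq" where
  "conv_id = (\<lambda>k. if k = 0 then mat 1 else 0)"

fun conv_pow :: "('d::finite, 'e::finite) mseq \<Rightarrow> nat \<Rightarrow> ('d, 'e) mseq" where
  "conv_pow A 0 = conv_id"
| "conv_pow A (Suc n) = conv (conv_pow A n) A"

definition conv_inv :: "('d::finite, 'e::finite) mseq \<Rightarrow> ('d, 'e) mseq" where
  "conv_inv A = (THE B. conv A B = conv_id \<and> conv B A = conv_id)"

text \<open>dg(u): diagonal part; dg_one = dg(1_s), the identity matrix at every point.\<close>
definition dg :: "('d::finite, 'e::finite) mseq \<Rightarrow> ('d, 'e) mseq" where
  "dg A = (\<lambda>k. \<chi> i j. if i = j then A k $ i $ j else 0)"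

definition dg_one :: "('d::finite, 'e::finite) mseq" where
  "dg_one = (\<lambda>k. mat 1)"

definition to_mseq :: "('e::finite \<Rightarrow> 'e \<Rightarrow> ('d::finite \<Rightarrow> nat) \<Rightarrow> real) \<Rightarrow> ('d, 'e) mseq" where
  "to_mseq f = (\<lambda>k. \<chi> i j. f i j k)"

text \<open>The a.s. conditional-probability property is expressed through the
  (equivalent, everything being discrete) finite-dimensional path probabilities.\<close>
definition MRC :: "'a measure \<Rightarrow> (nat \<Rightarrow> 'a \<Rightarrow> 'e) \<Rightarrow> (nat \<Rightarrow> 'a \<Rightarrow> ('d::finite \<Rightarrow> nat))
    \<Rightarrow> ('e \<Rightarrow> 'e \<Rightarrow> ('d \<Rightarrow> nat) \<Rightarrow> real) \<Rightarrow> bool" where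
  "MRC M J S q \<longleftrightarrow> prob_space M
    \<and> (\<forall>n. J n \<in> measurable M (count_space UNIV))
    \<and> (\<forall>n. S n \<in> measurable M (count_space UNIV))
    \<and> (AE \<omega> in M. S 0 \<omega> = 0)
    \<and> (\<forall>n. AE \<omega> in M. S n \<omega> < S (Suc n) \<omega>)
    \<and> (\<forall>n jj ss j k.
         measure M {\<omega>\<in>space M. (\<forall>m\<le>n. J m \<omega> = jj m \<and> S m \<omega> = ss m)
                              \<and> J (Suc n) \<omega> = j \<and> S (Suc n) \<omega> - S n \<omega> = k}
       = measure M {\<omega>\<in>space M. \<forall>m\<le>n. J m \<omega> = jj m \<and> S m \<omega> = ss m} * q (jj n) j k)"

definition Ncount :: "(nat \<Rightarrow> 'a \<Rightarrow> ('d::finite \<Rightarrow> nat)) \<Rightarrow> ('d \<Rightarrow> nat) \<Rightarrow> 'a \<Rightarrow> nat" where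
  "Ncount S k \<omega> = Sup {n. S n \<omega> \<le> k}"

definition Ntilde :: "(nat \<Rightarrow> 'a \<Rightarrow> 'e) \<Rightarrow> (nat \<Rightarrow> 'a \<Rightarrow> ('d::finite \<Rightarrow> nat)) \<Rightarrow> 'e \<Rightarrow> ('d \<Rightarrow> nat) \<Rightarrow> 'a \<Rightarrow> nat" where
  "Ntilde J S j k \<omega> = (\<Sum>n\<le>Ncount S k \<omega>. if J n \<omega> = j then 1 else 0)"

text \<open>Markov renewal function: U i j k = E_i[Ntilde_j(k)], where P_i = M i.\<close>
definition renewal_fun :: "('e \<Rightarrow> 'a measure) \<Rightarrow> (nat \<Rightarrow> 'a \<Rightarrow> 'e) \<Rightarrow> (nat \<Rightarrow> 'a \<Rightarrow> ('d::finite \<Rightarrow> nat))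
    \<Rightarrow> 'e \<Rightarrow> 'e \<Rightarrow> ('d \<Rightarrow> nat) \<Rightarrow> real" where
  "renewal_fun M J S i j k = (\<integral>\<omega>. real (Ntilde J S j k \<omega>) \<partial>M i)"

text \<open>First hitting time m_j = min{l >= 1. J_l = j}; the event S_{m_j} = k requires m_j finite.\<close>
definition hit_dens :: "('e \<Rightarrow> 'a measure) \<Rightarrow> (nat \<Rightarrow> 'a \<Rightarrow> 'e) \<Rightarrow> (nat \<Rightarrow> 'a \<Rightarrow> ('d::finite \<Rightarrow> nat))
    \<Rightarrow> 'e \<Rightarrow> 'e \<Rightarrow> ('d \<Rightarrow> nat) \<Rightarrow> real" where
  "hit_dens M J S i j k = measure (M i) {\<omega>\<in>space (M i). (\<exists>l\<ge>1. J l \<omega> = j)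
        \<and> S (LEAST l. 1 \<le> l \<and> J l \<omega> = j) \<omega> = k}"

definition hit_dist :: "('e \<Rightarrow> 'a measure) \<Rightarrow> (nat \<Rightarrow> 'a \<Rightarrow> 'e) \<Rightarrow> (nat \<Rightarrow> 'a \<Rightarrow> ('d::finite \<Rightarrow> nat))
    \<Rightarrow> 'e \<Rightarrow> 'e \<Rightarrow> ('d \<Rightarrow> nat) \<Rightarrow> real" where
  "hit_dist M J S i j k = (\<Sum>l\<in>{l. l \<le> k}. hit_dens M J S i j l)"

end

theory Submission
  imports Defs
begin


definition nrm :: "('d::finite \<Rightarrow> nat) \<Rightarrow> nat" where
  "nrm k = (\<Sum>d\<in>UNIV. k d)"

definition sc :: "(('d::finite \<Rightarrow> nat) \<Rightarrow> real) \<Rightarrow> (('d \<Rightarrow> nat) \<Rightarrow> real) \<Rightarrow> ('d \<Rightarrow> nat) \<Rightarrow> real" where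
  "sc f g k = (\<Sum>l\<in>{..k}. f l * g (k - l))"

definition delta :: "('d::finite \<Rightarrow> nat) \<Rightarrow> real" where
  "delta k = (if k = 0 then 1 else 0)"

lemma fin_atMost_fun[simp]: "finite {..k::'d::finite \<Rightarrow> nat}"
proof -
  have "{..k} \<subseteq> Pi\<^sub>E UNIV (\<lambda>d. {..k d})"
    by (auto simp: le_fun_def PiE_def Pi_def extensional_def)
  moreover have "finite (Pi\<^sub>E (UNIV::'d set) (\<lambda>d. {..k d}))"
    by (intro finite_PiE) auto
  ultimately show ?thesis by (rule finite_subset)
qed

lemma fin_le_fun[simp]: "finite {l::'d::finite \<Rightarrow> nat. l \<le> k}"
  using fin_atMost_fun[of k] by (simp add: atMost_def)

lemma fun_sub_add: "(l::'d \<Rightarrow> nat) \<le> k \<Longrightarrow> l + (k - l) = k"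
  by (auto simp: le_fun_def fun_eq_iff)

lemma fun_sub_sub: "(a::'d \<Rightarrow> nat) \<le> k \<Longrightarrow> k - (k - a) = a"
  by (auto simp: le_fun_def fun_eq_iff)

lemma fun_sub3: "(a::'d \<Rightarrow> nat) \<le> l \<Longrightarrow> l \<le> k \<Longrightarrow> k - a - (l - a) = k - l"
  by (auto simp: le_fun_def fun_eq_iff)

lemma fun_sub_mono: "(a::'d \<Rightarrow> nat) \<le> l \<Longrightarrow> l \<le> k \<Longrightarrow> l - a \<le> k - a"
  by (auto simp: le_fun_def diff_le_mono)

lemma fun_add_le: "(b::'d \<Rightarrow> nat) \<le> k - a \<Longrightarrow> a \<le> k \<Longrightarrow> a + b \<le> k"
  by (auto simp: le_fun_def) (metis le_diff_conv2 add.commute)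

lemma fun_le_add: "(a::'d \<Rightarrow> nat) \<le> a + b"
  by (auto simp: le_fun_def)

lemma sc_comm: "sc f g = sc g f"
proof (rule ext)
  fix k :: "'a::finite \<Rightarrow> nat"
  show "sc f g k = sc g f k"
    unfolding sc_def
    by (rule sum.reindex_bij_witness[where i="\<lambda>l. k - l" and j="\<lambda>l. k - l"])
       (auto simp: fun_sub_sub mult.commute le_fun_def)
qed

lemma sc_assoc: "sc (sc f g) h = sc f (sc g h)"
proof (rule ext)
  fix k :: "'a::finite \<Rightarrow> nat"
  have "sc (sc f g) h k = (\<Sum>l\<in>{..k}. \<Sum>a\<in>{..l}. f a * g (l - a) * h (k - l))"
    unfolding sc_def by (simp add: sum_distrib_right)
  also have "\<dots> = (\<Sum>l\<in>{..k}. \<Sum>a\<in>{a\<in>{..k}. a \<le> l}. f a * g (l - a) * h (k - l))"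
    by (intro sum.cong refl) (auto intro: order_trans)
  also have "\<dots> = (\<Sum>a\<in>{..k}. \<Sum>l\<in>{l\<in>{..k}. a \<le> l}. f a * g (l - a) * h (k - l))"
    by (rule sum.swap_restrict) auto
  also have "\<dots> = (\<Sum>a\<in>{..k}. \<Sum>b\<in>{..k-a}. f a * g b * h (k - a - b))"
  proof (rule sum.cong[OF refl])
    fix a assume a: "a \<in> {..k}"
    show "(\<Sum>l\<in>{l\<in>{..k}. a \<le> l}. f a * g (l - a) * h (k - l)) = (\<Sum>b\<in>{..k-a}. f a * g b * h (k - a - b))"
      apply (rule sum.reindex_bij_witness[where i="\<lambda>b. a + b" and j="\<lambda>l. l - a"])
      using a apply (auto simp: fun_sub3 fun_sub_mono fun_add_le fun_sub_add fun_le_add)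
      done
  qed
  also have "\<dots> = sc f (sc g h) k"
    unfolding sc_def by (simp add: sum_distrib_left mult.assoc)
  finally show "sc (sc f g) h k = sc f (sc g h) k" .
qed

lemma sc_delta_right[simp]: "sc f delta = f"
proof (rule ext)
  fix k :: "'a::finite \<Rightarrow> nat"
  have "sc f delta k = (\<Sum>l\<in>{..k}. if l = k then f l else 0)"
    unfolding sc_def delta_def
    by (intro sum.cong refl) (auto simp: le_fun_def fun_eq_iff, meson le_antisym)
  also have "\<dots> = f k" by (simp add: sum.delta')
  finally show "sc f delta k = f k" .
qed

lemma sc_delta_left[simp]: "sc delta f = f"
  using sc_delta_right[of f] sc_comm[of delta f] by simp

lemma sc_diff_left: "sc (\<lambda>k. f k - g k) h = (\<lambda>k. sc f h k - sc g h k)"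
  by (auto simp: sc_def fun_eq_iff left_diff_distrib sum_subtractf)

lemma sc_diff_right: "sc h (\<lambda>k. f k - g k) = (\<lambda>k. sc h f k - sc h g k)"
  by (auto simp: sc_def fun_eq_iff right_diff_distrib sum_subtractf)

lemma sc_cmult_left: "sc (\<lambda>k. c * f k) h = (\<lambda>k. c * sc f h k)"
  by (auto simp: sc_def fun_eq_iff sum_distrib_left mult.assoc)

lemma sc_cmult_right: "sc h (\<lambda>k. c * f k) = (\<lambda>k. c * sc h f k)"
  by (auto simp: sc_def fun_eq_iff sum_distrib_left mult.assoc mult.left_commute)

lemma sc_zero_right[simp]: "sc h (\<lambda>k. 0) = (\<lambda>k. 0)"
  by (auto simp: sc_def fun_eq_iff)

lemma sc_zero_left[simp]: "sc (\<lambda>k. 0) h = (\<lambda>k. 0)"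
  by (auto simp: sc_def fun_eq_iff)

lemma conv_entry: "conv A B k $ i $ j = (\<Sum>i'\<in>UNIV. sc (\<lambda>l. A l $ i $ i') (\<lambda>l. B l $ i' $ j) k)"
  unfolding conv_def sc_def atMost_def
  by (simp add: matrix_matrix_mult_def sum_component) (rule sum.swap)



lemma conv_diag_right:
  assumes "\<And>l i j. B l $ i $ j = (if i = j then b j l else 0)"
  shows "conv A B k $ i $ j = sc (\<lambda>l. A l $ i $ j) (b j) k"
proof -
  have "conv A B k $ i $ j = (\<Sum>i'\<in>UNIV. if i' = j then sc (\<lambda>l. A l $ i $ i') (b j) k else 0)"
    unfolding conv_entry by (intro sum.cong refl) (auto simp: assms)
  also have "\<dots> = sc (\<lambda>l. A l $ i $ j) (b j) k" by simp
  finally show ?thesis .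
qed

lemma conv_diag_left:
  assumes "\<And>l i j. A l $ i $ j = (if i = j then a i l else 0)"
  shows "conv A B k $ i $ j = sc (a i) (\<lambda>l. B l $ i $ j) k"
proof -
  have "conv A B k $ i $ j = (\<Sum>i'\<in>UNIV. if i' = i then sc (a i) (\<lambda>l. B l $ i $ j) k else 0)"
    unfolding conv_entry by (intro sum.cong refl) (auto simp: assms)
  also have "\<dots> = sc (a i) (\<lambda>l. B l $ i $ j) k" by simp
  finally show ?thesis .
qed

lemma conv_id_entry: "conv_id k $ i $ j = (if i = j then delta k else 0)"
  by (simp add: conv_id_def delta_def mat_def)

lemma final_alg:
  fixes U G gg uu :: "'e::finite \<Rightarrow> 'e \<Rightarrow> ('d::finite \<Rightarrow> nat) \<Rightarrow> real"
    and u :: "('d, 'e) mseq"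
  assumes uu: "\<And>i j k. u k $ i $ j = uu i j k"
    and R: "\<And>i j. (\<lambda>k. uu i j k - (if i = j then delta k else 0)) = sc (gg i j) (uu j j)"
    and Uf: "\<And>i j. U i j = sc (uu i j) (\<lambda>k. 1)"
    and Gf: "\<And>i j. G i j = sc (gg i j) (\<lambda>k. 1)"
  shows "to_mseq G = conv (\<lambda>k. to_mseq U k - dg_one k) (conv_inv (dg u))"
proof -
  define vv where "vv = (\<lambda>i k. delta k - gg i i k)"
  define V :: "('d, 'e) mseq" where "V = (\<lambda>k. \<chi> i j. if i = j then vv i k else 0)"
  have V: "V l $ i $ j = (if i = j then vv i l else 0)" for l i j
    by (simp add: V_def)
  have V': "V l $ i $ j = (if i = j then vv j l else 0)" for l i j
    by (simp add: V_def)
  have D: "dg u l $ i $ j = (if i = j then uu i i l else 0)" for l i j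
    by (simp add: dg_def uu)
  have R': "uu i i = (\<lambda>k. delta k + sc (gg i i) (uu i i) k)" for i
    using R[of i i] by (auto simp: fun_eq_iff algebra_simps dest: fun_cong)
  have ud: "sc (uu i i) (\<lambda>k. delta k - gg i i k) = delta" for i
  proof -
    have "sc (uu i i) (\<lambda>k. delta k - gg i i k) = (\<lambda>k. uu i i k - sc (uu i i) (gg i i) k)"
      by (simp add: sc_diff_right)
    also have "\<dots> = delta"
    proof
      fix x
      have "uu i i x - delta x = sc (gg i i) (uu i i) x" using fun_cong[OF R[of i i], of x] by simp
      then show "uu i i x - sc (uu i i) (gg i i) x = delta x" by (simp add: sc_comm[of "uu i i"])
    qed
    finally show ?thesis .
  qed
  have du: "sc (\<lambda>k. delta k - gg i i k) (uu i i) = delta" for i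
    using ud[of i] by (simp add: sc_comm)
  have inv: "conv_inv (dg u) = V"
    unfolding conv_inv_def
  proof (rule the_equality)
    show "conv (dg u) V = conv_id \<and> conv V (dg u) = conv_id"
    proof
      show "conv (dg u) V = conv_id"
        by (auto simp: fun_eq_iff vec_eq_iff conv_diag_left[OF D] conv_id_entry V vv_def sc_comm[of "uu _ _"] ud[simplified sc_comm[of "uu _ _"]])
      show "conv V (dg u) = conv_id"
        by (auto simp: fun_eq_iff vec_eq_iff conv_diag_left[OF V] conv_id_entry D du vv_def)
    qed
  next
    fix B assume B: "conv (dg u) B = conv_id \<and> conv B (dg u) = conv_id"
    have e: "sc (uu i i) (\<lambda>l. B l $ i $ j) = (\<lambda>k. if i = j then delta k else 0)" for i j
    proof
      fix k
      have "conv (dg u) B k $ i $ j = conv_id k $ i $ j" using B by simp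
      then show "sc (uu i i) (\<lambda>l. B l $ i $ j) k = (if i = j then delta k else 0)"
        by (simp add: conv_diag_left[OF D] conv_id_entry)
    qed
    have BV: "(\<lambda>l. B l $ i $ j) = (\<lambda>l. V l $ i $ j)" for i j
    proof -
      have "(\<lambda>l. B l $ i $ j) = sc (sc (\<lambda>k. delta k - gg i i k) (uu i i)) (\<lambda>l. B l $ i $ j)"
        by (simp add: du)
      also have "\<dots> = sc (\<lambda>k. delta k - gg i i k) (\<lambda>k. if i = j then delta k else 0)"
        by (simp add: sc_assoc e)
      also have "\<dots> = (\<lambda>l. V l $ i $ j)"
        by (cases "i = j") (auto simp: V fun_eq_iff vv_def)
      finally show ?thesis .
    qed
    show "B = V" using BV by (auto simp: fun_eq_iff vec_eq_iff dest: fun_cong)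
  qed
  show ?thesis
  proof (intro ext)
    fix k
    show "to_mseq G k = conv (\<lambda>k. to_mseq U k - dg_one k) (conv_inv (dg u)) k"
    proof (unfold inv, simp only: vec_eq_iff, intro allI)
      fix i j
      have A: "(\<lambda>l. (to_mseq U l - dg_one l) $ i $ j) = sc (sc (gg i j) (uu j j)) (\<lambda>k. 1)"
      proof -
        have "(\<lambda>l. (to_mseq U l - dg_one l) $ i $ j) = (\<lambda>l. sc (uu i j) (\<lambda>k. 1) l - sc (\<lambda>k. if i = j then delta k else 0) (\<lambda>k. 1) l)"
          by (cases "i = j") (auto simp: to_mseq_def dg_one_def Uf fun_eq_iff mat_def)
        also have "\<dots> = sc (\<lambda>k. uu i j k - (if i = j then delta k else 0)) (\<lambda>k. 1)"
          by (simp add: sc_diff_left)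
        also have "\<dots> = sc (sc (gg i j) (uu j j)) (\<lambda>k. 1)" by (simp add: R)
        finally show ?thesis .
      qed
      have "conv (\<lambda>k. to_mseq U k - dg_one k) V k $ i $ j
          = sc (sc (sc (gg i j) (uu j j)) (\<lambda>k. 1)) (\<lambda>k. delta k - gg j j k) k"
        by (subst conv_diag_right[OF V']) (simp only: A vv_def)
      also have "\<dots> = sc (gg i j) (sc (\<lambda>k. 1) (sc (uu j j) (\<lambda>k. delta k - gg j j k))) k"
        by (simp add: sc_assoc sc_comm[of "uu j j" "\<lambda>k. 1"])
      also have "\<dots> = G i j k" by (simp add: ud Gf)
      finally show "to_mseq G k $ i $ j = conv (\<lambda>k. to_mseq U k - dg_one k) V k $ i $ j"
        by (simp add: to_mseq_def)
    qed
  qed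
qed



lemma fh1:
  fixes l a b k' :: "'d \<Rightarrow> nat"
  assumes "l \<le> a" "a \<le> b" "b = l + k'"
  shows "a = l + (a - l)" "a - l \<le> k'" "b - a = k' - (a - l)"
  using assms by (auto simp: le_fun_def fun_eq_iff) (metis add_le_cancel_left le_add_diff_inverse)+

lemma fh2:
  fixes l a b k' l'' :: "'d \<Rightarrow> nat"
  assumes "a = l + l''" "a \<le> b" "b - a = k' - l''" "l'' \<le> k'"
  shows "b = l + k'"
  using assms by (auto simp: le_fun_def fun_eq_iff) (metis add.assoc le_add_diff_inverse)

lemma fh3: "(l::'d \<Rightarrow> nat) + k = l \<longleftrightarrow> k = 0"
  by (auto simp: fun_eq_iff)

lemma fh4: "(l::'d \<Rightarrow> nat) + a = l + b \<longleftrightarrow> a = b"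
  by (auto simp: fun_eq_iff)

lemma nrm_strict: "(a::'d::finite \<Rightarrow> nat) < b \<Longrightarrow> nrm a < nrm b"
  unfolding nrm_def
  by (rule sum_strict_mono_ex1) (auto simp: less_fun_def le_fun_def not_le)

lemma nrm_add: "nrm ((a::'d::finite \<Rightarrow> nat) + b) = nrm a + nrm b"
  by (simp add: nrm_def sum.distrib)

lemma nrm_sub: "(l::'d::finite \<Rightarrow> nat) \<le> k \<Longrightarrow> nrm l + nrm (k - l) = nrm k"
  using nrm_add[of l "k - l"] by (simp add: fun_sub_add)

lemma nrm_mono: "(l::'d::finite \<Rightarrow> nat) \<le> k \<Longrightarrow> nrm l \<le> nrm k"
  using nrm_sub[of l k] by linarith

locale mrc =
  fixes M :: "'a measure" and J :: "nat \<Rightarrow> 'a \<Rightarrow> 'e::finite"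
    and S :: "nat \<Rightarrow> 'a \<Rightarrow> ('d::finite \<Rightarrow> nat)" and q :: "'e \<Rightarrow> 'e \<Rightarrow> ('d \<Rightarrow> nat) \<Rightarrow> real"
  assumes MRC: "MRC M J S q"
    and qnn: "\<And>i j k. q i j k \<ge> 0"
begin

sublocale prob_space M using MRC by (simp add: MRC_def)

lemma J_meas[measurable]: "J n \<in> measurable M (count_space UNIV)"
  using MRC by (simp add: MRC_def)

lemma S_meas[measurable]: "S n \<in> measurable M (count_space UNIV)"
  using MRC by (simp add: MRC_def)

definition good :: "'a \<Rightarrow> bool" where
  "good \<omega> \<longleftrightarrow> S 0 \<omega> = 0 \<and> (\<forall>n. S n \<omega> < S (Suc n) \<omega>)"

lemma AE_good: "AE \<omega> in M. good \<omega>"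
proof -
  have "AE \<omega> in M. S 0 \<omega> = 0" using MRC by (simp add: MRC_def)
  moreover have "AE \<omega> in M. \<forall>n. S n \<omega> < S (Suc n) \<omega>"
    using MRC by (subst AE_all_countable) (simp add: MRC_def)
  ultimately show ?thesis by eventually_elim (simp add: good_def)
qed

lemma good_mono: "good \<omega> \<Longrightarrow> m \<le> n \<Longrightarrow> S m \<omega> \<le> S n \<omega>"
  by (rule lift_Suc_mono_le[of "\<lambda>n. S n \<omega>"]) (auto simp: good_def less_imp_le)

lemma good_nrm: "good \<omega> \<Longrightarrow> n \<le> nrm (S n \<omega>)"
proof (induction n)
  case (Suc n)
  then have "nrm (S n \<omega>) < nrm (S (Suc n) \<omega>)" by (intro nrm_strict) (auto simp: good_def)
  with Suc show ?case by simp
qed simp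

definition Pre :: "nat \<Rightarrow> 'a \<Rightarrow> ('e \<times> ('d \<Rightarrow> nat)) list" where
  "Pre n \<omega> = map (\<lambda>m. (J m \<omega>, S m \<omega>)) [0..<Suc n]"

lemma Pre_length[simp]: "length (Pre n \<omega>) = Suc n"
  by (simp add: Pre_def)

lemma Pre_nth[simp]: "m \<le> n \<Longrightarrow> Pre n \<omega> ! m = (J m \<omega>, S m \<omega>)"
  by (simp add: Pre_def nth_map_upt del: upt_Suc)

lemma Pre_eq: "Pre n \<omega> = x \<longleftrightarrow> length x = Suc n \<and> (\<forall>m\<le>n. J m \<omega> = fst (x!m) \<and> S m \<omega> = snd (x!m))"
  by (auto simp: list_eq_iff_nth_eq less_Suc_eq_le) (metis fst_conv snd_conv)+

lemma Pre_take: "m \<le> n \<Longrightarrow> take (Suc m) (Pre n \<omega>) = Pre m \<omega>"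
  by (simp add: list_eq_iff_nth_eq min_def less_Suc_eq_le)

lemma Pre_meas[measurable]: "Pre n \<in> measurable M (count_space UNIV)"
proof (rule measurable_count_space_eq2_countable[THEN iffD2], safe)
  fix x
  have "Pre n -` {x} \<inter> space M = {\<omega>\<in>space M. length x = Suc n \<and> (\<forall>m\<le>n. J m \<omega> = fst (x!m) \<and> S m \<omega> = snd (x!m))}"
    by (auto simp: Pre_eq)
  also have "\<dots> \<in> sets M" by measurable
  finally show "Pre n -` {x} \<inter> space M \<in> sets M" .
qed auto

definition Pev :: "nat \<Rightarrow> ('e \<times> ('d \<Rightarrow> nat)) list set \<Rightarrow> 'a set" where
  "Pev n A = {\<omega>\<in>space M. Pre n \<omega> \<in> A}"

lemma Pev_sets[measurable]: "Pev n A \<in> sets M"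
  unfolding Pev_def by measurable

end



context mrc begin

lemma ML1:
  assumes A: "\<forall>x\<in>A. fst (x!n) = i"
  shows "measure M (Pev n A \<inter> {\<omega>\<in>space M. J (Suc n) \<omega> = j \<and> S (Suc n) \<omega> - S n \<omega> = k})
       = measure M (Pev n A) * q i j k"
proof -
  define E where "E = {\<omega>\<in>space M. J (Suc n) \<omega> = j \<and> S (Suc n) \<omega> - S n \<omega> = k}"
  define X where "X x = {\<omega>\<in>space M. Pre n \<omega> = x}" for x
  have E_sets[measurable]: "E \<in> sets M" unfolding E_def by measurable
  have X_sets[measurable]: "X x \<in> sets M" for x unfolding X_def by measurable
  have cA: "countable A" by (rule countableI_type)
  have disj: "disjoint_family_on X A" "disjoint_family_on (\<lambda>x. X x \<inter> E) A"
    by (auto simp: disjoint_family_on_def X_def)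
  have U1: "Pev n A = (\<Union>x\<in>A. X x)" by (auto simp: Pev_def X_def)
  have U2: "Pev n A \<inter> E = (\<Union>x\<in>A. X x \<inter> E)" by (auto simp: Pev_def X_def)
  have each: "emeasure M (X x \<inter> E) = emeasure M (X x) * ennreal (q i j k)" if x: "x \<in> A" for x
  proof (cases "length x = Suc n")
    case True
    define jj where "jj m = fst (x!m)" for m
    define ss where "ss m = snd (x!m)" for m
    have "measure M {\<omega>\<in>space M. (\<forall>m\<le>n. J m \<omega> = jj m \<and> S m \<omega> = ss m)
                              \<and> J (Suc n) \<omega> = j \<and> S (Suc n) \<omega> - S n \<omega> = k}
       = measure M {\<omega>\<in>space M. \<forall>m\<le>n. J m \<omega> = jj m \<and> S m \<omega> = ss m} * q (jj n) j k"
      using MRC unfolding MRC_def by blast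
    moreover have "{\<omega>\<in>space M. (\<forall>m\<le>n. J m \<omega> = jj m \<and> S m \<omega> = ss m)
                              \<and> J (Suc n) \<omega> = j \<and> S (Suc n) \<omega> - S n \<omega> = k} = X x \<inter> E"
      using True by (auto simp: X_def E_def Pre_eq jj_def ss_def)
    moreover have "{\<omega>\<in>space M. \<forall>m\<le>n. J m \<omega> = jj m \<and> S m \<omega> = ss m} = X x"
      using True by (auto simp: X_def Pre_eq jj_def ss_def)
    moreover have "jj n = i" using A x by (simp add: jj_def)
    ultimately have "measure M (X x \<inter> E) = measure M (X x) * q i j k" by simp
    then show ?thesis
      by (simp add: emeasure_eq_measure ennreal_mult qnn)
  next
    case False
    then have "X x = {}" by (auto simp: X_def)
    then show ?thesis by simp
  qed
  have "emeasure M (Pev n A \<inter> E) = (\<integral>\<^sup>+x. emeasure M (X x \<inter> E) \<partial>count_space A)"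
    unfolding U2 by (rule emeasure_UN_countable) (use cA disj in auto)
  also have "\<dots> = (\<integral>\<^sup>+x. emeasure M (X x) * ennreal (q i j k) \<partial>count_space A)"
    by (rule nn_integral_cong) (simp add: each)
  also have "\<dots> = (\<integral>\<^sup>+x. emeasure M (X x) \<partial>count_space A) * ennreal (q i j k)"
    by (rule nn_integral_multc) auto
  also have "(\<integral>\<^sup>+x. emeasure M (X x) \<partial>count_space A) = emeasure M (Pev n A)"
    unfolding U1 by (rule emeasure_UN_countable[symmetric]) (use cA disj in auto)
  finally have "ennreal (measure M (Pev n A \<inter> E)) = ennreal (measure M (Pev n A) * q i j k)"
    by (simp add: emeasure_eq_measure ennreal_mult qnn)
  then show ?thesis
    unfolding E_def[symmetric] by (simp add: qnn)
qed

end



lemma conv_pow_Suc_entry: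
  "conv_pow (to_mseq q) (Suc r) k $ i $ j
     = (\<Sum>p\<in>UNIV \<times> {..k}. conv_pow (to_mseq q) r (snd p) $ i $ fst p * q (fst p) j (k - snd p))"
  by (simp add: conv_entry sc_def to_mseq_def sum.cartesian_product split_def)

lemma conv_pow_0_entry: "conv_pow A 0 k $ i $ j = (if i = j then delta k else 0)"
  by (simp add: conv_id_entry)

context mrc begin

lemma MLr:
  assumes A: "\<forall>x\<in>A. x!n = (i, l)"
  shows "measure M (Pev n A \<inter> {\<omega>\<in>space M. J (n + r) \<omega> = j \<and> S (n + r) \<omega> = l + k'})
       = measure M (Pev n A) * conv_pow (to_mseq q) r k' $ i $ j"
proof -
  have Sn: "S n \<omega> = l \<and> J n \<omega> = i" if "\<omega> \<in> Pev n A" for \<omega>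
  proof -
    from that have "Pre n \<omega> \<in> A" by (simp add: Pev_def)
    with A have "Pre n \<omega> ! n = (i, l)" by blast
    then show ?thesis by simp
  qed
  show ?thesis
proof (induction r arbitrary: j k')
  case 0
  have eq0: "Pev n A \<inter> {\<omega>\<in>space M. J (n + 0) \<omega> = j \<and> S (n + 0) \<omega> = l + k'}
      = (if i = j \<and> k' = 0 then Pev n A else {})"
    using Sn by (auto simp: fh3 Pev_def)
  show ?case by (subst eq0) (simp add: conv_id_entry delta_def)
next
  case (Suc r)
  define A' where "A' i' l'' = {x. length x = Suc (n + r) \<and> take (Suc n) x \<in> A \<and> x!(n+r) = (i', l + l'')}" for i' l''
  define E' where "E' l'' = {\<omega>\<in>space M. J (Suc (n + r)) \<omega> = j \<and> S (Suc (n + r)) \<omega> - S (n + r) \<omega> = k' - l''}" for l''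
  define F where "F p = Pev (n + r) (A' (fst p) (snd p)) \<inter> E' (snd p)" for p
  have E'_sets[measurable]: "E' l'' \<in> sets M" for l'' unfolding E'_def by measurable
  have F_sets[measurable]: "F p \<in> sets M" for p unfolding F_def by measurable
  have PevA': "Pev (n + r) (A' i' l'') = Pev n A \<inter> {\<omega>\<in>space M. J (n + r) \<omega> = i' \<and> S (n + r) \<omega> = l + l''}" for i' l''
    by (auto simp: Pev_def A'_def Pre_take)
  let ?L = "Pev n A \<inter> {\<omega>\<in>space M. J (n + Suc r) \<omega> = j \<and> S (n + Suc r) \<omega> = l + k'}"
  have "measure M ?L = measure M (\<Union>p\<in>UNIV \<times> {..k'}. F p)"
  proof (rule measure_eq_AE)
    show "AE \<omega> in M. (\<omega> \<in> ?L) = (\<omega> \<in> (\<Union>p\<in>UNIV \<times> {..k'}. F p))"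
      using AE_good
    proof eventually_elim
      case (elim \<omega>)
      have m1: "S n \<omega> \<le> S (n + r) \<omega>" by (rule good_mono[OF elim]) simp
      have m2: "S (n + r) \<omega> \<le> S (Suc (n + r)) \<omega>" by (rule good_mono[OF elim]) simp
      show ?case
      proof
        assume L: "\<omega> \<in> ?L"
        then have sl: "S n \<omega> = l" using Sn by auto
        have b: "S (Suc (n + r)) \<omega> = l + k'" using L by auto
        note h = fh1[OF m1[unfolded sl] m2 b]
        have "\<omega> \<in> F (J (n + r) \<omega>, S (n + r) \<omega> - l)"
          unfolding F_def PevA' E'_def using L h by auto
        moreover have "(J (n + r) \<omega>, S (n + r) \<omega> - l) \<in> UNIV \<times> {..k'}" using h by auto
        ultimately show "\<omega> \<in> (\<Union>p\<in>UNIV \<times> {..k'}. F p)" by blast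
      next
        assume "\<omega> \<in> (\<Union>p\<in>UNIV \<times> {..k'}. F p)"
        then obtain i' l'' where p: "l'' \<le> k'" "\<omega> \<in> F (i', l'')" by auto
        then have "S (n + r) \<omega> = l + l''" "S (Suc (n + r)) \<omega> - S (n + r) \<omega> = k' - l''"
          "\<omega> \<in> Pev n A" "J (Suc (n + r)) \<omega> = j" "\<omega> \<in> space M"
          by (auto simp: F_def PevA' E'_def)
        with fh2[OF this(1) m2 this(2) p(1)] show "\<omega> \<in> ?L" by auto
      qed
    qed
  qed measurable
  also have "\<dots> = (\<Sum>p\<in>UNIV \<times> {..k'}. measure M (F p))"
  proof (rule finite_measure_finite_Union)
    show "disjoint_family_on F (UNIV \<times> {..k'})"
      by (auto simp: disjoint_family_on_def F_def PevA' fh4)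
  qed auto
  also have "\<dots> = (\<Sum>p\<in>UNIV \<times> {..k'}. measure M (Pev n A) * (conv_pow (to_mseq q) r (snd p) $ i $ fst p * q (fst p) j (k' - snd p)))"
  proof (rule sum.cong[OF refl])
    fix p :: "'e \<times> ('d \<Rightarrow> nat)"
    have "measure M (F p) = measure M (Pev (n + r) (A' (fst p) (snd p))) * q (fst p) j (k' - snd p)"
      unfolding F_def E'_def by (rule ML1) (auto simp: A'_def)
    also have "measure M (Pev (n + r) (A' (fst p) (snd p))) = measure M (Pev n A) * conv_pow (to_mseq q) r (snd p) $ i $ fst p"
      unfolding PevA' by (rule Suc.IH)
    finally show "measure M (F p) = measure M (Pev n A) * (conv_pow (to_mseq q) r (snd p) $ i $ fst p * q (fst p) j (k' - snd p))"
      by (simp only: mult.assoc)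
  qed
  also have "\<dots> = measure M (Pev n A) * conv_pow (to_mseq q) (Suc r) k' $ i $ j"
    by (simp only: conv_pow_Suc_entry sum_distrib_left)
  finally show ?case by (simp only: add_Suc_right)
qed
qed

end



context mrc begin

lemma P2:
  assumes start: "AE \<omega> in M. J 0 \<omega> = i"
  shows "measure M {\<omega>\<in>space M. J n \<omega> = j \<and> S n \<omega> = k} = conv_pow (to_mseq q) n k $ i $ j"
proof -
  define A where "A = {[(i, 0::'d \<Rightarrow> nat)]}"
  have AA: "\<forall>x\<in>A. x!0 = (i, 0)" by (simp add: A_def)
  have PevA: "Pev 0 A = {\<omega>\<in>space M. J 0 \<omega> = i \<and> S 0 \<omega> = 0}"
    by (auto simp: Pev_def A_def Pre_eq)
  have AEs: "AE \<omega> in M. J 0 \<omega> = i \<and> S 0 \<omega> = 0"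
    using start AE_good by eventually_elim (simp add: good_def)
  have "measure M (Pev 0 A) = measure M (space M)"
    unfolding PevA by (rule measure_eq_AE) (use AEs in \<open>auto\<close>)
  then have m1: "measure M (Pev 0 A) = 1" by (simp add: prob_space)
  have "measure M {\<omega>\<in>space M. J n \<omega> = j \<and> S n \<omega> = k}
      = measure M (Pev 0 A \<inter> {\<omega>\<in>space M. J (0 + n) \<omega> = j \<and> S (0 + n) \<omega> = 0 + k})"
    by (rule measure_eq_AE) (use AEs in \<open>auto simp: PevA\<close>)
  also have "\<dots> = conv_pow (to_mseq q) n k $ i $ j"
    using MLr[OF AA, of n j k] m1 by simp
  finally show ?thesis .
qed

definition Fp :: "'e \<Rightarrow> nat \<Rightarrow> ('d \<Rightarrow> nat) \<Rightarrow> 'a set" where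
  "Fp j m l = {\<omega>\<in>space M. J m \<omega> = j \<and> (\<forall>t. 1 \<le> t \<and> t < m \<longrightarrow> J t \<omega> \<noteq> j) \<and> S m \<omega> = l}"

lemma Fp_sets[measurable]: "Fp j m l \<in> sets M"
  unfolding Fp_def by measurable

lemma Fp_disj: "\<omega> \<in> Fp j m l \<Longrightarrow> \<omega> \<in> Fp j m' l' \<Longrightarrow> 1 \<le> m \<Longrightarrow> 1 \<le> m' \<Longrightarrow> m = m' \<and> l = l'"
  unfolding Fp_def by (metis (mono_tags, lifting) linorder_neqE_nat mem_Collect_eq)

lemma Fp_Pev: "Fp j m l = Pev m {x. length x = Suc m \<and> x!m = (j, l) \<and> (\<forall>t. 1 \<le> t \<and> t < m \<longrightarrow> fst (x!t) \<noteq> j)}"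
  by (auto simp: Fp_def Pev_def)

lemma Fp_zero: "nrm l < m \<Longrightarrow> measure M (Fp j m l) = 0"
proof -
  assume m: "nrm l < m"
  have "measure M (Fp j m l) = measure M {}"
  proof (rule measure_eq_AE)
    show "AE \<omega> in M. (\<omega> \<in> Fp j m l) = (\<omega> \<in> {})"
      using AE_good
    proof eventually_elim
      case (elim \<omega>)
      show ?case using good_nrm[OF elim, of m] m by (auto simp: Fp_def)
    qed
  qed auto
  then show ?thesis by simp
qed

lemma first_pass:
  assumes n: "1 \<le> n"
  shows "measure M {\<omega>\<in>space M. J n \<omega> = j \<and> S n \<omega> = k}
       = (\<Sum>p\<in>{1..n} \<times> {..k}. measure M (Fp j (fst p) (snd p)) * conv_pow (to_mseq q) (n - fst p) (k - snd p) $ j $ j)"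
proof -
  define G where "G p = Fp j (fst p) (snd p) \<inter> {\<omega>\<in>space M. J (fst p + (n - fst p)) \<omega> = j \<and> S (fst p + (n - fst p)) \<omega> = snd p + (k - snd p)}" for p
  have G_sets[measurable]: "G p \<in> sets M" for p unfolding G_def by measurable
  have "measure M {\<omega>\<in>space M. J n \<omega> = j \<and> S n \<omega> = k} = measure M (\<Union>p\<in>{1..n} \<times> {..k}. G p)"
  proof (rule measure_eq_AE)
    show "AE \<omega> in M. (\<omega> \<in> {\<omega>\<in>space M. J n \<omega> = j \<and> S n \<omega> = k}) = (\<omega> \<in> (\<Union>p\<in>{1..n} \<times> {..k}. G p))"
      using AE_good
    proof eventually_elim
      case (elim \<omega>)
      show ?case
      proof
        assume L: "\<omega> \<in> {\<omega>\<in>space M. J n \<omega> = j \<and> S n \<omega> = k}"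
        define m where "m = (LEAST t. 1 \<le> t \<and> J t \<omega> = j)"
        have ex: "1 \<le> n \<and> J n \<omega> = j" using L n by auto
        have m1: "1 \<le> m \<and> J m \<omega> = j" unfolding m_def by (rule LeastI[where P="\<lambda>t. 1 \<le> t \<and> J t \<omega> = j", OF ex])
        have m2: "m \<le> n" unfolding m_def by (rule Least_le[where P="\<lambda>t. 1 \<le> t \<and> J t \<omega> = j", OF ex])
        have m3: "\<forall>t. 1 \<le> t \<and> t < m \<longrightarrow> J t \<omega> \<noteq> j"
          unfolding m_def using not_less_Least by blast
        have l: "S m \<omega> \<le> k" using good_mono[OF elim m2] L by auto
        have "\<omega> \<in> G (m, S m \<omega>)"
          using L m1 m2 m3 l by (auto simp: G_def Fp_def fun_sub_add)
        moreover have "(m, S m \<omega>) \<in> {1..n} \<times> {..k}" using m1 m2 l by auto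
        ultimately show "\<omega> \<in> (\<Union>p\<in>{1..n} \<times> {..k}. G p)" by blast
      next
        assume "\<omega> \<in> (\<Union>p\<in>{1..n} \<times> {..k}. G p)"
        then obtain m l where "m \<le> n" "l \<le> k" "\<omega> \<in> G (m, l)" by auto
        then show "\<omega> \<in> {\<omega>\<in>space M. J n \<omega> = j \<and> S n \<omega> = k}"
          by (auto simp: G_def fun_sub_add)
      qed
    qed
  qed measurable
  also have "\<dots> = (\<Sum>p\<in>{1..n} \<times> {..k}. measure M (G p))"
  proof (rule finite_measure_finite_Union)
    show "disjoint_family_on G ({1..n} \<times> {..k})"
      unfolding disjoint_family_on_def G_def using Fp_disj by fastforce
  qed auto
  also have "\<dots> = (\<Sum>p\<in>{1..n} \<times> {..k}. measure M (Fp j (fst p) (snd p)) * conv_pow (to_mseq q) (n - fst p) (k - snd p) $ j $ j)"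
  proof (rule sum.cong[OF refl])
    fix p assume "p \<in> {1..n} \<times> {..k}"
    show "measure M (G p) = measure M (Fp j (fst p) (snd p)) * conv_pow (to_mseq q) (n - fst p) (k - snd p) $ j $ j"
      unfolding G_def Fp_Pev by (rule MLr) auto
  qed
  finally show ?thesis .
qed

lemma hit:
  "measure M {\<omega>\<in>space M. (\<exists>l\<ge>1. J l \<omega> = j) \<and> S (LEAST l. 1 \<le> l \<and> J l \<omega> = j) \<omega> = k}
     = (\<Sum>m\<in>{1..nrm k}. measure M (Fp j m k))"
proof -
  have "measure M {\<omega>\<in>space M. (\<exists>l\<ge>1. J l \<omega> = j) \<and> S (LEAST l. 1 \<le> l \<and> J l \<omega> = j) \<omega> = k}
      = measure M (\<Union>m\<in>{1..nrm k}. Fp j m k)"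
  proof (rule measure_eq_AE)
    show "AE \<omega> in M. (\<omega> \<in> {\<omega>\<in>space M. (\<exists>l\<ge>1. J l \<omega> = j) \<and> S (LEAST l. 1 \<le> l \<and> J l \<omega> = j) \<omega> = k})
        = (\<omega> \<in> (\<Union>m\<in>{1..nrm k}. Fp j m k))"
      using AE_good
    proof eventually_elim
      case (elim \<omega>)
      show ?case
      proof
        assume L: "\<omega> \<in> {\<omega>\<in>space M. (\<exists>l\<ge>1. J l \<omega> = j) \<and> S (LEAST l. 1 \<le> l \<and> J l \<omega> = j) \<omega> = k}"
        define m where "m = (LEAST t. 1 \<le> t \<and> J t \<omega> = j)"
        obtain n where ex: "1 \<le> n \<and> J n \<omega> = j" using L by auto
        have m1: "1 \<le> m \<and> J m \<omega> = j" unfolding m_def by (rule LeastI[where P="\<lambda>t. 1 \<le> t \<and> J t \<omega> = j", OF ex])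
        have m3: "\<forall>t. 1 \<le> t \<and> t < m \<longrightarrow> J t \<omega> \<noteq> j"
          unfolding m_def using not_less_Least by blast
        have Sm: "S m \<omega> = k" using L by (simp add: m_def)
        have "m \<le> nrm k" using good_nrm[OF elim, of m] Sm by simp
        then show "\<omega> \<in> (\<Union>m\<in>{1..nrm k}. Fp j m k)"
          using L m1 m3 Sm by (auto simp: Fp_def)
      next
        assume "\<omega> \<in> (\<Union>m\<in>{1..nrm k}. Fp j m k)"
        then obtain m where m: "1 \<le> m" "\<omega> \<in> Fp j m k" by auto
        then have le: "(LEAST l. 1 \<le> l \<and> J l \<omega> = j) = m"
        proof (intro Least_equality)
          show "1 \<le> m \<and> J m \<omega> = j" using m by (auto simp: Fp_def)
        next
          fix y assume y: "1 \<le> y \<and> J y \<omega> = j"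
          show "m \<le> y"
          proof (rule ccontr)
            assume "\<not> m \<le> y"
            then have "y < m" by simp
            then show False using y m by (auto simp: Fp_def)
          qed
        qed
        show "\<omega> \<in> {\<omega>\<in>space M. (\<exists>l\<ge>1. J l \<omega> = j) \<and> S (LEAST l. 1 \<le> l \<and> J l \<omega> = j) \<omega> = k}"
          using m le by (auto simp: Fp_def)
      qed
    qed
  qed measurable
  also have "\<dots> = (\<Sum>m\<in>{1..nrm k}. measure M (Fp j m k))"
  proof (rule finite_measure_finite_Union)
    show "disjoint_family_on (\<lambda>m. Fp j m k) {1..nrm k}"
      unfolding disjoint_family_on_def using Fp_disj by fastforce
  qed auto
  finally show ?thesis .
qed

end



context mrc begin

lemma Ncount_meas[measurable]: "Ncount S k \<in> measurable M (count_space UNIV)"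
  unfolding Ncount_def by measurable

lemma Ntilde_meas[measurable]: "(\<lambda>\<omega>. real (Ntilde J S j k \<omega>)) \<in> borel_measurable M"
proof -
  have "(\<lambda>\<omega>. (\<lambda>N \<omega>. real (\<Sum>n\<le>N. if J n \<omega> = j then 1 else 0::nat)) (Ncount S k \<omega>) \<omega>) \<in> borel_measurable M"
    by (rule measurable_compose_countable[OF _ Ncount_meas]) measurable
  then show ?thesis by (simp add: Ntilde_def)
qed

lemma Ntilde_good:
  assumes g: "good \<omega>" and that: "\<omega> \<in> space M"
  shows "real (Ntilde J S j k \<omega>) = (\<Sum>n\<le>nrm k. indicator {\<omega>\<in>space M. J n \<omega> = j \<and> S n \<omega> \<le> k} \<omega>)"
proof -
  define X where "X = {n. S n \<omega> \<le> k}"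
  have X0: "0 \<in> X" using g by (simp add: X_def good_def)
  have Xb: "X \<subseteq> {..nrm k}"
  proof
    fix x assume "x \<in> X"
    then have "nrm (S x \<omega>) \<le> nrm k" by (intro nrm_mono) (simp add: X_def)
    then show "x \<in> {..nrm k}" using good_nrm[OF g, of x] by simp
  qed
  then have finX: "finite X" by (rule finite_subset) simp
  define N where "N = Max X"
  have NX: "N \<in> X" unfolding N_def using finX X0 by (intro Max_in) auto
  have XN: "X = {..N}"
  proof
    show "X \<subseteq> {..N}" unfolding N_def using finX by auto
    show "{..N} \<subseteq> X"
    proof
      fix n assume "n \<in> {..N}"
      then have "S n \<omega> \<le> S N \<omega>" using good_mono[OF g] by simp
      then show "n \<in> X" using NX by (auto simp: X_def)
    qed
  qed
  have Nc: "Ncount S k \<omega> = N"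
    unfolding Ncount_def X_def[symmetric] Sup_nat_def N_def using X0 by auto
  have Nle: "N \<le> nrm k" using Xb NX by auto
  have "Ntilde J S j k \<omega> = (\<Sum>n\<le>N. if J n \<omega> = j then 1 else 0)"
    by (simp add: Ntilde_def Nc)
  also have "\<dots> = (\<Sum>n\<le>nrm k. if J n \<omega> = j \<and> S n \<omega> \<le> k then 1 else 0)"
  proof (rule sum.mono_neutral_cong_left)
    show "\<forall>i\<in>{..nrm k} - {..N}. (if J i \<omega> = j \<and> S i \<omega> \<le> k then 1 else 0) = (0::nat)"
      using XN by (auto simp: X_def)
    show "\<And>x. x \<in> {..N} \<Longrightarrow> (if J x \<omega> = j then 1 else 0) = (if J x \<omega> = j \<and> S x \<omega> \<le> k then 1 else (0::nat))"
      using XN by (auto simp: X_def)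
  qed (use Nle in auto)
  finally show ?thesis using that by (simp only: of_nat_sum) (rule sum.cong, auto simp: indicator_def)
qed

lemma renew:
  "(\<integral>\<omega>. real (Ntilde J S j k \<omega>) \<partial>M) = (\<Sum>n\<le>nrm k. measure M {\<omega>\<in>space M. J n \<omega> = j \<and> S n \<omega> \<le> k})"
proof -
  have "(\<integral>\<omega>. real (Ntilde J S j k \<omega>) \<partial>M) = (\<integral>\<omega>. (\<Sum>n\<le>nrm k. indicator {\<omega>\<in>space M. J n \<omega> = j \<and> S n \<omega> \<le> k} \<omega>) \<partial>M)"
  proof (rule integral_cong_AE)
    show "AE \<omega> in M. real (Ntilde J S j k \<omega>) = (\<Sum>n\<le>nrm k. indicator {\<omega>\<in>space M. J n \<omega> = j \<and> S n \<omega> \<le> k} \<omega>)"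
      using AE_good AE_space by eventually_elim (rule Ntilde_good)
  qed measurable
  also have "\<dots> = (\<Sum>n\<le>nrm k. measure M {\<omega>\<in>space M. J n \<omega> = j \<and> S n \<omega> \<le> k})"
  proof -
    have I: "integrable M (indicator {\<omega>\<in>space M. J n \<omega> = j \<and> S n \<omega> \<le> k} :: _ \<Rightarrow> real)" for n
      by (rule integrable_real_indicator) (measurable, simp add: less_top[symmetric])
    have "{\<omega>\<in>space M. J n \<omega> = j \<and> S n \<omega> \<le> k} \<inter> space M = {\<omega>\<in>space M. J n \<omega> = j \<and> S n \<omega> \<le> k}" for n
      by auto
    then show ?thesis using I by (simp add: integral_sum)
  qed
  finally show ?thesis .
qed

lemma le_sum:
  "measure M {\<omega>\<in>space M. J n \<omega> = j \<and> S n \<omega> \<le> k} = (\<Sum>l\<in>{..k}. measure M {\<omega>\<in>space M. J n \<omega> = j \<and> S n \<omega> = l})"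
proof -
  have "{\<omega>\<in>space M. J n \<omega> = j \<and> S n \<omega> \<le> k} = (\<Union>l\<in>{..k}. {\<omega>\<in>space M. J n \<omega> = j \<and> S n \<omega> = l})"
    by auto
  also have "measure M \<dots> = (\<Sum>l\<in>{..k}. measure M {\<omega>\<in>space M. J n \<omega> = j \<and> S n \<omega> = l})"
    by (rule finite_measure_finite_Union) (auto simp: disjoint_family_on_def)
  finally show ?thesis .
qed

end



lemma tri_sum:
  fixes H :: "nat \<Rightarrow> nat \<Rightarrow> real"
  shows "(\<Sum>n\<in>{1..K}. \<Sum>m\<in>{1..n}. H m (n - m)) = (\<Sum>m\<in>{1..K}. \<Sum>r\<le>K - m. H m r)"
proof -
  have "(\<Sum>n\<in>{1..K}. \<Sum>m\<in>{1..n}. H m (n - m)) = (\<Sum>n\<in>{1..K}. \<Sum>m\<in>{m\<in>{1..K}. m \<le> n}. H m (n - m))"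
    by (intro sum.cong refl) auto
  also have "\<dots> = (\<Sum>m\<in>{1..K}. \<Sum>n\<in>{n\<in>{1..K}. m \<le> n}. H m (n - m))"
    by (rule sum.swap_restrict) auto
  also have "\<dots> = (\<Sum>m\<in>{1..K}. \<Sum>r\<le>K - m. H m r)"
  proof (rule sum.cong[OF refl])
    fix m assume m: "m \<in> {1..K}"
    show "(\<Sum>n\<in>{n\<in>{1..K}. m \<le> n}. H m (n - m)) = (\<Sum>r\<le>K - m. H m r)"
      by (rule sum.reindex_bij_witness[where i="\<lambda>r. r + m" and j="\<lambda>n. n - m"]) (use m in auto)
  qed
  finally show ?thesis .
qed

lemma nrm_zero: "nrm (k::'d::finite \<Rightarrow> nat) = 0 \<Longrightarrow> k = 0"
  by (auto simp: nrm_def fun_eq_iff)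

lemma Qpow_zero:
  assumes q0: "\<And>i j. q i j 0 = 0"
  shows "nrm k < n \<Longrightarrow> conv_pow (to_mseq q) n k = 0"
proof (induction n arbitrary: k)
  case 0 then show ?case by simp
next
  case (Suc n)
  have "conv_pow (to_mseq q) n l ** to_mseq q (k - l) = 0" if l: "l \<le> k" for l
  proof (cases "nrm l < n")
    case True then show ?thesis using Suc.IH by simp
  next
    case False
    then have "nrm (k - l) = 0" using nrm_sub[OF l] Suc.prems by linarith
    then have "k - l = 0" by (rule nrm_zero)
    then have "to_mseq q (k - l) = 0" by (simp add: to_mseq_def q0 vec_eq_iff)
    then show ?thesis by simp
  qed
  then show ?case by (simp add: conv_def)
qed



lemma q_facts:
  assumes C: "MRC M J S q" and st: "AE \<omega> in M. J 0 \<omega> = i"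
  shows "q i j k \<ge> 0" "q i j 0 = 0"
proof -
  have P: "prob_space M" using C by (simp add: MRC_def)
  have [measurable]: "J n \<in> measurable M (count_space UNIV)" "S n \<in> measurable M (count_space UNIV)" for n
    using C by (auto simp: MRC_def)
  have all: "\<forall>n jj ss j k.
         measure M {\<omega>\<in>space M. (\<forall>m\<le>n. J m \<omega> = jj m \<and> S m \<omega> = ss m)
                              \<and> J (Suc n) \<omega> = j \<and> S (Suc n) \<omega> - S n \<omega> = k}
       = measure M {\<omega>\<in>space M. \<forall>m\<le>n. J m \<omega> = jj m \<and> S m \<omega> = ss m} * q (jj n) j k"
    using C by (simp add: MRC_def)
  have AE0: "AE \<omega> in M. J 0 \<omega> = i \<and> S 0 \<omega> = 0" using st C by (simp add: MRC_def)
  have AE1: "AE \<omega> in M. S 0 \<omega> < S (Suc 0) \<omega>" using C by (simp add: MRC_def)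
  have "measure M {\<omega>\<in>space M. \<forall>m\<le>0. J m \<omega> = i \<and> S m \<omega> = 0} = measure M (space M)"
    by (rule measure_eq_AE) (use AE0 in auto)
  then have pre1: "measure M {\<omega>\<in>space M. \<forall>m\<le>0. J m \<omega> = i \<and> S m \<omega> = 0} = 1"
    using P by (simp add: prob_space.prob_space)
  have qeq: "q i j k' = measure M {\<omega>\<in>space M. (\<forall>m\<le>0. J m \<omega> = i \<and> S m \<omega> = 0)
                              \<and> J (Suc 0) \<omega> = j \<and> S (Suc 0) \<omega> - S 0 \<omega> = k'}" for k'
    using all[rule_format, of 0 "\<lambda>_. i" "\<lambda>_. 0" j k'] pre1 by simp
  show "q i j k \<ge> 0" by (simp add: qeq)
  have "measure M {\<omega>\<in>space M. (\<forall>m\<le>0. J m \<omega> = i \<and> S m \<omega> = 0)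
                              \<and> J (Suc 0) \<omega> = j \<and> S (Suc 0) \<omega> - S 0 \<omega> = 0} = measure M {}"
  proof (rule measure_eq_AE)
    show "AE \<omega> in M. (\<omega> \<in> {\<omega>\<in>space M. (\<forall>m\<le>0. J m \<omega> = i \<and> S m \<omega> = 0)
                              \<and> J (Suc 0) \<omega> = j \<and> S (Suc 0) \<omega> - S 0 \<omega> = 0}) = (\<omega> \<in> {})"
      using AE1
    proof eventually_elim
      case (elim \<omega>)
      then obtain d where "S 0 \<omega> d < S (Suc 0) \<omega> d"
        by (auto simp: less_fun_def le_fun_def not_le)
      then have "S (Suc 0) \<omega> - S 0 \<omega> \<noteq> 0" by (auto simp: fun_eq_iff intro!: exI[of _ d])
      then show ?case by auto
    qed
  qed auto
  then show "q i j 0 = 0" by (simp add: qeq)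
qed

theorem corollary4:
  fixes M :: "'e::finite \<Rightarrow> 'a measure"
    and J :: "nat \<Rightarrow> 'a \<Rightarrow> 'e"
    and S :: "nat \<Rightarrow> 'a \<Rightarrow> ('d::finite \<Rightarrow> nat)"
    and q :: "'e \<Rightarrow> 'e \<Rightarrow> ('d \<Rightarrow> nat) \<Rightarrow> real"
  assumes chain: "\<And>i. MRC (M i) J S q"
    and start: "\<And>i. AE \<omega> in M i. J 0 \<omega> = i"
  defines "u \<equiv> (\<lambda>k. \<Sum>n. conv_pow (to_mseq q) n k)"
  shows "to_mseq (hit_dist M J S)
         = conv (\<lambda>k. to_mseq (renewal_fun M J S) k - dg_one k) (conv_inv (dg u))"
proof -
  have qnn: "q i j k \<ge> 0" for i j k using q_facts[OF chain start] by blast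
  have q0: "q i j 0 = 0" for i j using q_facts[OF chain start] by blast
  have mi: "mrc (M i) J S q" for i using chain qnn by (simp add: mrc_def)
  define Qp where "Qp n k = conv_pow (to_mseq q) n k" for n k
  define uu where "uu i j k = (\<Sum>n\<le>nrm k. Qp n k $ i $ j)" for i j k
  have Qz: "nrm k < n \<Longrightarrow> Qp n k = 0" for n k unfolding Qp_def by (rule Qpow_zero[where q=q, OF q0])
  have uN: "uu i j k = (\<Sum>n\<le>N. Qp n k $ i $ j)" if "nrm k \<le> N" for i j k N
    unfolding uu_def by (rule sum.mono_neutral_left) (use that Qz in auto)
  have u_uu: "u k $ i $ j = uu i j k" for i j k
  proof -
    have "u k = (\<Sum>n\<le>nrm k. Qp n k)"
      unfolding u_def Qp_def[symmetric] by (rule suminf_finite) (use Qz in auto)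
    then show ?thesis by (simp add: uu_def)
  qed
  have P2': "measure (M i) {\<omega>\<in>space (M i). J n \<omega> = j \<and> S n \<omega> = k} = Qp n k $ i $ j" for i j n k
    unfolding Qp_def by (rule mrc.P2[OF mi start])
  have Uf: "renewal_fun M J S i j = sc (uu i j) (\<lambda>k. 1)" for i j
  proof
    fix k :: "'d \<Rightarrow> nat"
    have "renewal_fun M J S i j k = (\<Sum>n\<le>nrm k. measure (M i) {\<omega>\<in>space (M i). J n \<omega> = j \<and> S n \<omega> \<le> k})"
      unfolding renewal_fun_def by (rule mrc.renew[OF mi])
    also have "\<dots> = (\<Sum>n\<le>nrm k. \<Sum>l\<in>{..k}. Qp n l $ i $ j)"
      by (simp add: mrc.le_sum[OF mi] P2')
    also have "\<dots> = (\<Sum>l\<in>{..k}. \<Sum>n\<le>nrm k. Qp n l $ i $ j)"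
      by (rule sum.swap)
    also have "\<dots> = (\<Sum>l\<in>{..k}. uu i j l)"
      by (intro sum.cong refl uN[symmetric]) (simp add: nrm_mono)
    also have "\<dots> = sc (uu i j) (\<lambda>k. 1) k" by (simp add: sc_def)
    finally show "renewal_fun M J S i j k = sc (uu i j) (\<lambda>k. 1) k" .
  qed
  have Gf: "hit_dist M J S i j = sc (hit_dens M J S i j) (\<lambda>k. 1)" for i j
    by (simp add: hit_dist_def sc_def atMost_def fun_eq_iff)
  have R: "(\<lambda>k. uu i j k - (if i = j then delta k else 0)) = sc (hit_dens M J S i j) (uu j j)" for i j
  proof
    fix k :: "'d \<Rightarrow> nat"
    define K where "K = nrm k"
    define f where "f m l = measure (M i) (mrc.Fp (M i) J S j m l)" for m l
    define H where "H m r = (\<Sum>l\<in>{..k}. f m l * Qp r (k - l) $ j $ j)" for m r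
    have fz: "nrm l < m \<Longrightarrow> f m l = 0" for m l unfolding f_def by (rule mrc.Fp_zero[OF mi])
    have hd: "hit_dens M J S i j l = (\<Sum>m\<in>{1..nrm l}. f m l)" for l
      unfolding hit_dens_def f_def by (rule mrc.hit[OF mi])
    have Hz: "H m r = 0" if "K < m + r" for m r
      unfolding H_def
    proof (rule sum.neutral, intro ballI)
      fix l assume l: "l \<in> {..k}"
      have "nrm l < m \<or> nrm (k - l) < r" using nrm_sub[of l k] l that by (auto simp: K_def)
      then show "f m l * Qp r (k - l) $ j $ j = 0" using fz Qz by auto
    qed
    have "uu i j k = Qp 0 k $ i $ j + (\<Sum>n\<in>{1..K}. Qp n k $ i $ j)"
    proof -
      have "{..K} = insert 0 {1..K}" by auto
      then show ?thesis by (simp add: uu_def K_def)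
    qed
    then have "uu i j k - (if i = j then delta k else 0) = (\<Sum>n\<in>{1..K}. Qp n k $ i $ j)"
      by (simp add: Qp_def conv_id_entry)
    also have "\<dots> = (\<Sum>n\<in>{1..K}. \<Sum>m\<in>{1..n}. H m (n - m))"
    proof (rule sum.cong[OF refl])
      fix n assume n: "n \<in> {1..K}"
      have "Qp n k $ i $ j = measure (M i) {\<omega>\<in>space (M i). J n \<omega> = j \<and> S n \<omega> = k}" by (simp add: P2')
      also have "\<dots> = (\<Sum>p\<in>{1..n} \<times> {..k}. f (fst p) (snd p) * Qp (n - fst p) (k - snd p) $ j $ j)"
        unfolding f_def Qp_def by (rule mrc.first_pass[OF mi]) (use n in auto)
      also have "\<dots> = (\<Sum>m\<in>{1..n}. H m (n - m))"
        by (simp add: H_def sum.cartesian_product split_def)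
      finally show "Qp n k $ i $ j = (\<Sum>m\<in>{1..n}. H m (n - m))" .
    qed
    also have "\<dots> = (\<Sum>m\<in>{1..K}. \<Sum>r\<le>K - m. H m r)" by (rule tri_sum)
    also have "\<dots> = (\<Sum>m\<in>{1..K}. \<Sum>r\<le>K. H m r)"
      by (intro sum.cong refl sum.mono_neutral_left) (auto intro!: Hz)
    also have "\<dots> = (\<Sum>m\<in>{1..K}. \<Sum>r\<le>K. \<Sum>l\<in>{..k}. f m l * Qp r (k - l) $ j $ j)"
      by (simp add: H_def)
    also have "\<dots> = (\<Sum>l\<in>{..k}. \<Sum>m\<in>{1..K}. \<Sum>r\<le>K. f m l * Qp r (k - l) $ j $ j)"
      by (subst sum.swap) (simp add: sum.swap[of _ "{..K}"])
    also have "\<dots> = (\<Sum>l\<in>{..k}. (\<Sum>m\<in>{1..K}. f m l) * (\<Sum>r\<le>K. Qp r (k - l) $ j $ j))"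
      by (simp add: sum_product)
    also have "\<dots> = (\<Sum>l\<in>{..k}. hit_dens M J S i j l * uu j j (k - l))"
    proof (rule sum.cong[OF refl])
      fix l assume l: "l \<in> {..k}"
      have "(\<Sum>m\<in>{1..K}. f m l) = hit_dens M J S i j l"
        unfolding hd by (rule sum.mono_neutral_right) (use l fz nrm_mono[of l k] in \<open>auto simp: K_def\<close>)
      moreover have "(\<Sum>r\<le>K. Qp r (k - l) $ j $ j) = uu j j (k - l)"
        by (rule uN[symmetric]) (use l nrm_sub[of l k] in \<open>simp add: K_def\<close>)
      ultimately show "(\<Sum>m\<in>{1..K}. f m l) * (\<Sum>r\<le>K. Qp r (k - l) $ j $ j) = hit_dens M J S i j l * uu j j (k - l)"
        by simp
    qed
    also have "\<dots> = sc (hit_dens M J S i j) (uu j j) k" by (simp add: sc_def)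
    finally show "uu i j k - (if i = j then delta k else 0) = sc (hit_dens M J S i j) (uu j j) k" .
  qed
  show ?thesis
    by (rule final_alg[OF u_uu R Uf Gf])
qed

end
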